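(* Fix a positive integer $g$ and constants $\epsilon>0$, $b>0$, $\eta>0$. For each $N$, let $G_N$ be a random graph drawn from an inhomogeneous random graph model on the node set $V=\{1,\dots,N\}$ with edge probabilities $p_{ij}$ ($i\neq j$) satisfying $p_{ij}>(1+\epsilon)/N$ for all $i\neq j$. Suppose that the set $V_p\subset V$ of nodes $i$ such that $p_{ij}<b/N$ for all $j\neq i$ satisfies $|V_p|>\eta N$. Let $D_g(N)$ denote the number of subsets $S\subset V$ that are $g$-dangling in $G_N$. Then $\mathbb{E}[D_g(N)]$ grows proportionally to $N$: there exist constants $c>0$ and $N_0$ (depending on $g,\epsilon,b,\eta$ but not on $N$) such that $cN\le \mathbb{E}[D_g(N)]\le N$ for all $N\ge N_0$.
   Context: An inhomogeneous random graph model on $N$ nodes is a random undirected graph without self-loops in which each pair $\{i,j\}$, $i\neq j$, is an edge independently with probability $p_{ij}$. In an unweighted graph $G=(V,E)$, a subset $S\subset V$ is called $g$-dangling if: (i) $|S|=g$; (ii) the node-induced subgraph on $S$ has exactly $g-1$ edges and contains no cycle (i.e., it is a tree); (iii) there is exactly one edge of $G$ with one endpoint in $S$ and the other in $V\setminus S$. *)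

theory Defs
  imports Main "HOL-Library.FuncSet" Complex_Main
begin

text \<open>Node set V = {1..N}; an undirected graph without self-loops on V is a set of
  edges, each edge a two-element subset of V.\<close>

definition node_set :: "nat \<Rightarrow> nat set" where
  "node_set N = {1..N}"

definition all_pairs :: "nat \<Rightarrow> nat set set" where
  "all_pairs N = {{i, j} | i j. i \<in> node_set N \<and> j \<in> node_set N \<and> i \<noteq> j}"

definition edge_prob :: "(nat \<Rightarrow> nat \<Rightarrow> real) \<Rightarrow> nat set \<Rightarrow> real" where
  "edge_prob p e = p (Min e) (Max e)"

definition graph_prob :: "nat \<Rightarrow> (nat \<Rightarrow> nat \<Rightarrow> real) \<Rightarrow> nat set set \<Rightarrow> real" where
  "graph_prob N p E =
     (\<Prod>e\<in>all_pairs N. if e \<in> E then edge_prob p e else 1 - edge_prob p e)"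

definition adj :: "nat set set \<Rightarrow> nat \<Rightarrow> nat \<Rightarrow> bool" where
  "adj E u v \<longleftrightarrow> {u, v} \<in> E \<and> u \<noteq> v"

definition induced_edges :: "nat set set \<Rightarrow> nat set \<Rightarrow> nat set set" where
  "induced_edges E S = {e \<in> E. e \<subseteq> S}"

definition has_cycle_in :: "nat set set \<Rightarrow> nat set \<Rightarrow> bool" where
  "has_cycle_in E S \<longleftrightarrow> (\<exists>vs. length vs \<ge> 3 \<and> distinct vs \<and> set vs \<subseteq> S \<and>
      (\<forall>k. Suc k < length vs \<longrightarrow> adj E (vs ! k) (vs ! Suc k)) \<and>
      adj E (last vs) (hd vs))"

definition boundary_edges :: "nat set set \<Rightarrow> nat set \<Rightarrow> nat set set" where
  "boundary_edges E S = {e \<in> E. e \<inter> S \<noteq> {} \<and> \<not> e \<subseteq> S}"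

definition dangling :: "nat set set \<Rightarrow> nat \<Rightarrow> nat set \<Rightarrow> bool" where
  "dangling E g S \<longleftrightarrow> card S = g \<and> card (induced_edges E S) = g - 1 \<and>
      \<not> has_cycle_in E S \<and> card (boundary_edges E S) = 1"

definition D_count :: "nat \<Rightarrow> nat \<Rightarrow> nat set set \<Rightarrow> nat" where
  "D_count N g E = card {S. S \<subseteq> node_set N \<and> dangling E g S}"

definition expected_D :: "nat \<Rightarrow> nat \<Rightarrow> (nat \<Rightarrow> nat \<Rightarrow> real) \<Rightarrow> real" where
  "expected_D N g p = (\<Sum>E\<in>Pow (all_pairs N). graph_prob N p E * real (D_count N g E))"

definition V_p :: "nat \<Rightarrow> real \<Rightarrow> (nat \<Rightarrow> nat \<Rightarrow> real) \<Rightarrow> nat set" where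
  "V_p N b p = {i \<in> node_set N. \<forall>j\<in>node_set N. j \<noteq> i \<longrightarrow> p i j < b / real N}"

end

theory Submission
  imports Defs
begin

lemma adj_sym: "adj E u v = adj E v u"
  by (auto simp: adj_def insert_commute)

lemma cycle_mono: "has_cycle_in E A \<Longrightarrow> A \<subseteq> B \<Longrightarrow> has_cycle_in E B"
  unfolding has_cycle_in_def by blast

lemma two_nbrs_cycle:
  assumes fin: "finite A" and ne: "A \<noteq> {}"
    and nb: "\<forall>x\<in>A. \<exists>y1 y2. y1 \<noteq> y2 \<and> y1 \<in> A \<and> y2 \<in> A \<and> adj E x y1 \<and> adj E x y2"
  shows "has_cycle_in E A"
proof -
  define P where "P = {vs. vs \<noteq> [] \<and> distinct vs \<and> set vs \<subseteq> A \<and>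
      (\<forall>k. Suc k < length vs \<longrightarrow> adj E (vs!k) (vs!Suc k))}"
  have "P \<subseteq> {xs. set xs \<subseteq> A \<and> length xs \<le> card A}"
    unfolding P_def using fin by (auto simp: distinct_card[symmetric] intro: card_mono)
  hence finP: "finite P" using finite_lists_length_le[OF fin] finite_subset by blast
  obtain a where a: "a \<in> A" using ne by blast
  have "[a] \<in> P" using a by (simp add: P_def)
  hence "P \<noteq> {}" by blast
  hence "Max (length ` P) \<in> length ` P" using finP by (intro Max_in) auto
  then obtain vs where vsP: "vs \<in> P" and vsm: "length vs = Max (length ` P)" by auto
  have maxl: "length ws \<le> length vs" if "ws \<in> P" for ws
    using that finP vsm by (simp add: Max_ge)
  define n where "n = length vs"
  have vs: "vs \<noteq> []" "distinct vs" "set vs \<subseteq> A"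
     "\<And>k. Suc k < n \<Longrightarrow> adj E (vs!k) (vs!Suc k)" using vsP by (auto simp: P_def n_def)
  have n1: "n \<ge> 1" using vs(1) by (cases vs) (auto simp: n_def)
  define x where "x = last vs"
  have xn: "x = vs ! (n - 1)" using vs(1) by (simp add: x_def n_def last_conv_nth)
  have xA: "x \<in> A" using vs(1,3) last_in_set by (auto simp: x_def)
  obtain y1 y2 where y: "y1 \<noteq> y2" "y1 \<in> A" "y2 \<in> A" "adj E x y1" "adj E x y2"
    using nb xA by blast
  obtain w where w: "w \<in> A" "adj E x w" "n \<ge> 2 \<longrightarrow> w \<noteq> vs ! (n - 2)"
  proof (cases "n \<ge> 2 \<and> y1 = vs ! (n - 2)")
    case True
    then show ?thesis using that[of y2] y by auto
  next
    case False
    then show ?thesis using that[of y1] y by auto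
  qed
  have wv: "w \<in> set vs"
  proof (rule ccontr)
    assume wn: "w \<notin> set vs"
    have "vs @ [w] \<in> P"
      unfolding P_def
    proof (intro CollectI conjI allI impI)
      show "vs @ [w] \<noteq> []" by simp
      show "distinct (vs @ [w])" using vs(2) wn by simp
      show "set (vs @ [w]) \<subseteq> A" using vs(3) w(1) by simp
      fix k assume k: "Suc k < length (vs @ [w])"
      show "adj E ((vs @ [w]) ! k) ((vs @ [w]) ! Suc k)"
      proof (cases "Suc k < n")
        case True
        then show ?thesis using vs(4)[OF True] by (simp add: nth_append n_def)
      next
        case False
        hence "k = n - 1" "Suc k = n" using k by (auto simp: n_def)
        then show ?thesis using w(2) xn by (simp add: nth_append n_def)
      qed
    qed
    from maxl[OF this] show False by simp
  qed
  then obtain i where i: "i < n" "vs ! i = w" by (auto simp: in_set_conv_nth n_def)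
  have "x \<noteq> w" using w(2) by (simp add: adj_def)
  hence "i \<noteq> n - 1" using xn i by auto
  moreover have "n \<ge> 2 \<longrightarrow> i \<noteq> n - 2" using w(3) i by auto
  ultimately have i3: "i + 3 \<le> n" using i(1) by arith
  define cs where "cs = drop i vs"
  show ?thesis
    unfolding has_cycle_in_def
  proof (intro exI[of _ cs] conjI allI impI)
    show "3 \<le> length cs" using i3 by (simp add: cs_def n_def)
    show "distinct cs" using vs(2) by (simp add: cs_def)
    show "set cs \<subseteq> A" using vs(3) set_drop_subset by (force simp: cs_def)
    fix k assume k: "Suc k < length cs"
    hence "Suc (i + k) < n" by (simp add: cs_def n_def)
    from vs(4)[OF this] show "adj E (cs ! k) (cs ! Suc k)"
      using i by (simp add: cs_def nth_drop n_def)
  next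
    have "last cs = x" using i by (simp add: cs_def x_def last_drop n_def)
    moreover have "hd cs = w" using i by (simp add: cs_def hd_drop_conv_nth n_def)
    ultimately show "adj E (last cs) (hd cs)" using w(2) by simp
  qed
qed

lemma card2_obtain:
  assumes "card e = 2" "x \<in> e" obtains y where "y \<noteq> x" "e = {x, y}"
proof -
  obtain a b where ab: "e = {a, b}" "a \<noteq> b" using assms(1) by (auto simp: card_2_iff)
  show ?thesis
  proof (cases "x = a")
    case True then show ?thesis using ab that by (metis)
  next
    case False then have "x = b" using assms(2) ab by auto
    then show ?thesis using ab that by (metis insert_commute)
  qed
qed

lemma forest_bound:
  assumes two: "\<forall>e\<in>E. card e = 2"
  shows "finite A \<Longrightarrow> A \<noteq> {} \<Longrightarrow> \<not> has_cycle_in E A \<Longrightarrow>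
         card (induced_edges E A) \<le> card A - 1"
proof (induction "card A" arbitrary: A rule: less_induct)
  case less
  have finI: "finite (induced_edges E A)"
    by (rule finite_subset[of _ "Pow A"]) (auto simp: induced_edges_def less.prems(1))
  show ?case
  proof (cases "\<exists>x\<in>A. card {e\<in>E. x \<in> e \<and> e \<subseteq> A} \<le> 1")
    case True
    then obtain x where x: "x \<in> A" "card {e\<in>E. x \<in> e \<and> e \<subseteq> A} \<le> 1" by blast
    show ?thesis
    proof (cases "A = {x}")
      case True
      have "induced_edges E A = {}"
      proof (rule ccontr)
        assume "induced_edges E A \<noteq> {}"
        then obtain e where "e \<in> E" "e \<subseteq> {x}" using True by (auto simp: induced_edges_def)
        hence "card e \<le> card {x}" by (intro card_mono) auto
        hence "card e \<le> 1" by simp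
        with two \<open>e\<in>E\<close> show False by auto
      qed
      then show ?thesis by simp
    next
      case False
      define A' where "A' = A - {x}"
      have A': "finite A'" "A' \<noteq> {}" "card A' < card A" "card A' = card A - 1"
      proof -
        have "card A > 0" using less.prems(1) x(1) card_gt_0_iff by blast
        then show "finite A'" "A' \<noteq> {}" "card A' < card A" "card A' = card A - 1"
          using less.prems(1) x(1) False by (auto simp: A'_def)
      qed
      have "\<not> has_cycle_in E A'" using less.prems(3) cycle_mono[of E A' A] by (auto simp: A'_def)
      with less.hyps[OF A'(3)] A' have IH: "card (induced_edges E A') \<le> card A' - 1" by blast
      have sub: "induced_edges E A \<subseteq> induced_edges E A' \<union> {e\<in>E. x \<in> e \<and> e \<subseteq> A}"
        by (auto simp: induced_edges_def A'_def)
      have finD: "finite {e\<in>E. x \<in> e \<and> e \<subseteq> A}"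
        by (rule finite_subset[of _ "Pow A"]) (auto simp: less.prems(1))
      have finI': "finite (induced_edges E A')"
        by (rule finite_subset[of _ "Pow A'"]) (auto simp: induced_edges_def A')
      have "card (induced_edges E A) \<le> card (induced_edges E A' \<union> {e\<in>E. x \<in> e \<and> e \<subseteq> A})"
        using sub finD finI' by (intro card_mono) auto
      also have "\<dots> \<le> card (induced_edges E A') + card {e\<in>E. x \<in> e \<and> e \<subseteq> A}"
        by (rule card_Un_le)
      moreover have "card A' > 0" using A' card_gt_0_iff by blast
      ultimately show ?thesis using IH x(2) A' by linarith
    qed
  next
    case False
    have "has_cycle_in E A"
    proof (rule two_nbrs_cycle[OF less.prems(1,2)], intro ballI)
      fix x assume xA: "x \<in> A"
      define D where "D = {e\<in>E. x \<in> e \<and> e \<subseteq> A}"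
      have cD: "card D \<ge> 2" using False xA by (auto simp: D_def)
      then obtain e1 where e1: "e1 \<in> D" by fastforce
      have "\<not> D \<subseteq> {e1}"
      proof
        assume "D \<subseteq> {e1}"
        hence "card D \<le> card {e1}" by (intro card_mono) auto
        with cD show False by simp
      qed
      then obtain e2 where e2: "e2 \<in> D" "e2 \<noteq> e1" by blast
      from e1 have e1': "e1 \<in> E" "x \<in> e1" "e1 \<subseteq> A" by (auto simp: D_def)
      from e2 have e2': "e2 \<in> E" "x \<in> e2" "e2 \<subseteq> A" by (auto simp: D_def)
      obtain y1 where y1: "y1 \<noteq> x" "e1 = {x, y1}" using card2_obtain two e1' by metis
      obtain y2 where y2: "y2 \<noteq> x" "e2 = {x, y2}" using card2_obtain two e2' by metis
      show "\<exists>y1 y2. y1 \<noteq> y2 \<and> y1 \<in> A \<and> y2 \<in> A \<and> adj E x y1 \<and> adj E x y2"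
        using y1 y2 e1' e2' e2(2) by (auto simp: adj_def)
    qed
    with less.prems(3) show ?thesis by blast
  qed
qed

definition cutp :: "nat set set \<Rightarrow> nat set \<Rightarrow> bool" where
  "cutp E S \<longleftrightarrow> (\<forall>X. S \<inter> X \<noteq> {} \<longrightarrow> \<not> S \<subseteq> X \<longrightarrow> (\<exists>e\<in>E. e \<subseteq> S \<and> e \<inter> X \<noteq> {} \<and> \<not> e \<subseteq> X))"

lemma dangling_cutp:
  assumes two: "\<forall>e\<in>E. card e = 2" and fin: "finite S" and d: "dangling E g S"
  shows "cutp E S"
  unfolding cutp_def
proof (intro allI impI, rule ccontr)
  fix X assume X: "S \<inter> X \<noteq> {}" "\<not> S \<subseteq> X" and no: "\<not> (\<exists>e\<in>E. e \<subseteq> S \<and> e \<inter> X \<noteq> {} \<and> \<not> e \<subseteq> X)"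
  define A where "A = S \<inter> X"
  define B where "B = S - X"
  have AB: "A \<noteq> {}" "B \<noteq> {}" "finite A" "finite B" using X fin by (auto simp: A_def B_def)
  have cs: "card A + card B = card S"
    using fin unfolding A_def B_def by (metis Int_Diff_Un Int_Diff_disjoint card_Un_disjoint finite_Diff finite_Int)
  have nc: "\<not> has_cycle_in E A" "\<not> has_cycle_in E B"
    using d cycle_mono[of E A S] cycle_mono[of E B S] by (auto simp: dangling_def A_def B_def)
  have sub: "induced_edges E S \<subseteq> induced_edges E A \<union> induced_edges E B"
    using no by (auto simp: induced_edges_def A_def B_def)
  have finA: "finite (induced_edges E A)"
    by (rule finite_subset[of _ "Pow A"]) (auto simp: induced_edges_def AB)
  have finB: "finite (induced_edges E B)"
    by (rule finite_subset[of _ "Pow B"]) (auto simp: induced_edges_def AB)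
  have "card (induced_edges E S) \<le> card (induced_edges E A \<union> induced_edges E B)"
    using sub finA finB by (intro card_mono) auto
  also have "\<dots> \<le> card (induced_edges E A) + card (induced_edges E B)" by (rule card_Un_le)
  also have "\<dots> \<le> (card A - 1) + (card B - 1)"
    using forest_bound[OF two] AB nc by (intro add_mono) auto
  finally have "card (induced_edges E S) \<le> (card A - 1) + (card B - 1)" .
  moreover have "card A \<ge> 1" "card B \<ge> 1" using AB by (auto simp: Suc_le_eq card_gt_0_iff)
  ultimately show False using d cs by (auto simp: dangling_def)
qed


definition bd :: "nat set set \<Rightarrow> nat set \<Rightarrow> nat set" where
  "bd E S = the_elem (boundary_edges E S)"
definition inn :: "nat set set \<Rightarrow> nat set \<Rightarrow> nat" where
  "inn E S = the_elem (bd E S \<inter> S)"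
definition out :: "nat set set \<Rightarrow> nat set \<Rightarrow> nat" where
  "out E S = the_elem (bd E S - S)"

lemma bd_props:
  assumes two: "\<forall>e\<in>E. card e = 2" and c1: "card (boundary_edges E S) = 1"
  shows "boundary_edges E S = {bd E S}" "bd E S \<in> E" "inn E S \<in> S" "out E S \<notin> S"
    "bd E S = {inn E S, out E S}"
proof -
  obtain e where be: "boundary_edges E S = {e}" using c1 card_1_singletonE by blast
  hence bde: "bd E S = e" by (simp add: bd_def)
  have e: "e \<in> E" "e \<inter> S \<noteq> {}" "\<not> e \<subseteq> S" using be by (auto simp: boundary_edges_def)
  obtain a b where ab: "e = {a, b}" "a \<noteq> b" using two e(1) by (auto simp: card_2_iff)
  have "(a \<in> S \<and> b \<notin> S) \<or> (b \<in> S \<and> a \<notin> S)" using e ab by auto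
  then obtain u v where uv: "e = {u, v}" "u \<in> S" "v \<notin> S"
    using ab by (metis insert_commute)
  have "bd E S \<inter> S = {u}" "bd E S - S = {v}" using uv bde by auto
  hence "inn E S = u" "out E S = v" by (auto simp: inn_def out_def)
  then show "boundary_edges E S = {bd E S}" "bd E S \<in> E" "inn E S \<in> S" "out E S \<notin> S"
    "bd E S = {inn E S, out E S}" using be bde e uv by auto
qed

lemma closed_contains:
  assumes "cutp E S" "boundary_edges E X = {}" "S \<inter> X \<noteq> {}"
  shows "S \<subseteq> X"
proof (rule ccontr)
  assume "\<not> S \<subseteq> X"
  with assms(1,3) obtain e where "e \<in> E" "e \<subseteq> S" "e \<inter> X \<noteq> {}" "\<not> e \<subseteq> X"
    unfolding cutp_def by blast
  hence "e \<in> boundary_edges E X" by (auto simp: boundary_edges_def)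
  with assms(2) show False by simp
qed

lemma key:
  assumes two: "\<forall>e\<in>E. card e = 2"
    and fS: "finite S" and fT: "finite T"
    and dS: "dangling E g S" and dT: "dangling E g T"
    and ne: "S \<noteq> T" and int: "S \<inter> T \<noteq> {}"
  shows "bd E S \<subseteq> T" "boundary_edges E (S \<union> T) = {}"
proof -
  have cS: "cutp E S" and cT: "cutp E T" using dangling_cutp[OF two] fS fT dS dT by auto
  have bS: "boundary_edges E S = {bd E S}" using bd_props[OF two] dS by (auto simp: dangling_def)
  have bT: "boundary_edges E T = {bd E T}" using bd_props[OF two] dT by (auto simp: dangling_def)
  have cardeq: "card S = card T" using dS dT by (simp add: dangling_def)
  have nTS: "\<not> T \<subseteq> S" using card_subset_eq[OF fS _ cardeq[symmetric]] ne by blast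
  have nST: "\<not> S \<subseteq> T" using card_subset_eq[OF fT _ cardeq] ne by blast
  obtain e where e: "e \<in> E" "e \<subseteq> T" "e \<inter> S \<noteq> {}" "\<not> e \<subseteq> S"
    using cT nTS int unfolding cutp_def by (metis inf_commute)
  hence "e \<in> boundary_edges E S" by (auto simp: boundary_edges_def)
  with bS e show 1: "bd E S \<subseteq> T" by auto
  obtain e' where e': "e' \<in> E" "e' \<subseteq> S" "e' \<inter> T \<noteq> {}" "\<not> e' \<subseteq> T"
    using cS nST int unfolding cutp_def by metis
  hence "e' \<in> boundary_edges E T" by (auto simp: boundary_edges_def)
  with bT e' have 2: "bd E T \<subseteq> S" by auto
  show "boundary_edges E (S \<union> T) = {}"
  proof (rule ccontr)
    assume "boundary_edges E (S \<union> T) \<noteq> {}"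
    then obtain f where f: "f \<in> E" "f \<inter> (S \<union> T) \<noteq> {}" "\<not> f \<subseteq> S \<union> T"
      by (auto simp: boundary_edges_def)
    show False
    proof (cases "f \<inter> S \<noteq> {}")
      case True
      with f have "f \<in> boundary_edges E S" by (auto simp: boundary_edges_def)
      with bS 1 f show False by auto
    next
      case False
      with f have "f \<in> boundary_edges E T" by (auto simp: boundary_edges_def)
      with bT 2 f show False by auto
    qed
  qed
qed

lemma card_pairs: "e \<in> all_pairs N \<Longrightarrow> card e = 2 \<and> e \<subseteq> node_set N"
  by (auto simp: all_pairs_def)

lemma D_le:
  assumes EU: "E \<subseteq> all_pairs N"
  shows "D_count N g E \<le> N"
proof -
  define V where "V = node_set N"
  have two: "\<forall>e\<in>E. card e = 2" and eV: "\<forall>e\<in>E. e \<subseteq> V"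
    using EU card_pairs by (auto simp: V_def)
  define F where "F = {S. S \<subseteq> V \<and> dangling E g S}"
  have finV: "finite V" by (simp add: V_def node_set_def)
  have Fp: "finite S" "dangling E g S" "S \<subseteq> V" "cutp E S" "boundary_edges E S = {bd E S}"
    "bd E S \<in> E" "inn E S \<in> S" "out E S \<notin> S" "bd E S = {inn E S, out E S}"
    "card S = g" if "S \<in> F" for S
  proof -
    show fS: "finite S" "dangling E g S" "S \<subseteq> V" using that finV finite_subset by (auto simp: F_def)
    show "cutp E S" using dangling_cutp[OF two fS(1,2)] .
    show "boundary_edges E S = {bd E S}"
    "bd E S \<in> E" "inn E S \<in> S" "out E S \<notin> S" "bd E S = {inn E S, out E S}" "card S = g"
      using bd_props[OF two] fS(2) by (auto simp: dangling_def)
  qed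
  define iso where "iso S = (\<forall>T\<in>F. T \<noteq> S \<longrightarrow> T \<inter> S = {})" for S
  define f where "f S = (if iso S then inn E S else out E S)" for S
  have fV: "f S \<in> V" if "S \<in> F" for S
  proof -
    have "out E S \<in> V" using Fp[OF that] eV by auto
    then show ?thesis using Fp[OF that] by (auto simp: f_def)
  qed
  have case_mixed: False if S: "S \<in> F" and S': "S' \<in> F" and iS: "iso S" and iS': "\<not> iso S'"
    and eq: "inn E S = out E S'" for S S'
  proof -
    obtain T' where T': "T' \<in> F" "T' \<noteq> S'" "T' \<inter> S' \<noteq> {}" using iS' unfolding iso_def by blast
    have isoS: "\<And>T. T \<in> F \<Longrightarrow> T \<noteq> S \<Longrightarrow> T \<inter> S = {}" using iS unfolding iso_def by blast
    have "S' \<noteq> S" using iS iS' by auto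
    have "bd E S' \<subseteq> T'" using key(1)[OF two Fp(1)[OF S'] Fp(1)[OF T'(1)] Fp(2)[OF S'] Fp(2)[OF T'(1)]] T'
      by (metis inf_commute)
    hence w: "inn E S \<in> T'" using eq Fp(9)[OF S'] by auto
    have "T' \<noteq> S"
    proof
      assume "T' = S"
      with T' isoS[OF S' \<open>S' \<noteq> S\<close>] show False by blast
    qed
    with w Fp(7)[OF S] isoS[OF T'(1)] show False by blast
  qed
  have "inj_on f F"
  proof (rule inj_onI, rule ccontr)
    fix S S' assume S: "S \<in> F" and S': "S' \<in> F" and eq: "f S = f S'" and ne: "S \<noteq> S'"
    consider "iso S" "iso S'" | "\<not> iso S" "\<not> iso S'" | "iso S" "\<not> iso S'" | "\<not> iso S" "iso S'"
      by blast
    then show False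
    proof cases
      case 1
      hence "inn E S = inn E S'" using eq by (simp add: f_def)
      hence "S' \<inter> S \<noteq> {}" using Fp(7)[OF S] Fp(7)[OF S'] by auto
      with 1 S' ne show False unfolding iso_def by blast
    next
      case 2
      hence v: "out E S = out E S'" using eq by (simp add: f_def)
      obtain T where T: "T \<in> F" "T \<noteq> S" "T \<inter> S \<noteq> {}" using 2 unfolding iso_def by blast
      have k1: "bd E S \<subseteq> T" "boundary_edges E (S \<union> T) = {}"
        using key[OF two Fp(1)[OF S] Fp(1)[OF T(1)] Fp(2)[OF S] Fp(2)[OF T(1)]] T by (auto simp: inf_commute)
      have vT: "out E S' \<in> T" using k1(1) v Fp(9)[OF S] by auto
      have "inn E S' \<in> S \<union> T"
      proof (rule ccontr)
        assume nin: "inn E S' \<notin> S \<union> T"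
        have "bd E S' \<in> boundary_edges E (S \<union> T)"
          using Fp(6,9)[OF S'] nin vT by (auto simp: boundary_edges_def)
        with k1(2) show False by simp
      qed
      hence "S' \<inter> (S \<union> T) \<noteq> {}" using Fp(7)[OF S'] by auto
      hence sub: "S' \<subseteq> S \<union> T" using closed_contains[OF Fp(4)[OF S'] k1(2)] by blast
      have "S \<inter> S' \<noteq> {}"
      proof
        assume dis: "S \<inter> S' = {}"
        hence "S' \<subseteq> T - S" using sub by auto
        hence "card S' \<le> card (T - S)" using Fp(1)[OF T(1)] by (intro card_mono) auto
        also have "card (T - S) = card T - card (T \<inter> S)"
          using Fp(1)[OF T(1)] by (metis card_Diff_subset_Int finite_Int)
        also have "\<dots> < card T"
        proof -
          have "card (T \<inter> S) > 0" using T(3) Fp(1)[OF T(1)] by (auto simp: card_gt_0_iff)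
          moreover have "card T > 0" using T(3) Fp(1)[OF T(1)] by (auto simp: card_gt_0_iff)
          ultimately show ?thesis by linarith
        qed
        finally show False using Fp(10)[OF S'] Fp(10)[OF T(1)] by simp
      qed
      hence "bd E S \<subseteq> S'" using key(1)[OF two Fp(1)[OF S] Fp(1)[OF S'] Fp(2)[OF S] Fp(2)[OF S'] ne] by blast
      hence "out E S' \<in> S'" using v Fp(9)[OF S] by auto
      with Fp(8)[OF S'] show False by simp
    next
      case 3
      then show False using case_mixed[OF S S'] eq by (simp add: f_def)
    next
      case 4
      then show False using case_mixed[OF S' S] eq by (simp add: f_def)
    qed
  qed
  hence "card F \<le> card V" using fV finV by (intro card_inj_on_le) auto
  then show ?thesis by (simp add: D_count_def F_def V_def node_set_def)
qed


lemma sum_pow_prod: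
  assumes "finite U"
  shows "(\<Sum>E\<in>Pow U. \<Prod>e\<in>U. h e (e \<in> E)) = (\<Prod>e\<in>U. h e True + h e False :: real)"
proof -
  have "(\<Prod>e\<in>U. h e True + h e False) =
     (\<Sum>X\<in>Pow U. (\<Prod>e\<in>X. h e True) * (\<Prod>e\<in>U - X. h e False))"
    by (rule prod_add[OF assms])
  also have "\<dots> = (\<Sum>X\<in>Pow U. \<Prod>e\<in>U. h e (e \<in> X))"
  proof (rule sum.cong[OF refl])
    fix X assume X: "X \<in> Pow U"
    have "(\<Prod>e\<in>U. h e (e \<in> X)) = (\<Prod>e\<in>U. if e \<in> X then h e True else h e False)"
      by (rule prod.cong) auto
    also have "\<dots> = (\<Prod>e\<in>U \<inter> {e. e \<in> X}. h e True) * (\<Prod>e\<in>U \<inter> - {e. e \<in> X}. h e False)"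
      using assms by (rule prod.If_cases)
    also have "U \<inter> {e. e \<in> X} = X" using X by auto
    also have "U \<inter> - {e. e \<in> X} = U - X" by auto
    finally show "(\<Prod>e\<in>X. h e True) * (\<Prod>e\<in>U - X. h e False) = (\<Prod>e\<in>U. h e (e \<in> X))" ..
  qed
  finally show ?thesis ..
qed

lemma marg:
  fixes q :: "'a \<Rightarrow> real"
  assumes fin: "finite U" and RK: "R \<subseteq> K" and KU: "K \<subseteq> U"
  shows "(\<Sum>E\<in>Pow U. (\<Prod>e\<in>U. if e \<in> E then q e else 1 - q e) * (if E \<inter> K = R then 1 else 0))
        = (\<Prod>e\<in>K. if e \<in> R then q e else 1 - q e)"
proof -
  define h where "h e b = (if b then q e else 1 - q e) * (if e \<in> K \<and> b \<noteq> (e \<in> R) then 0 else 1)" for e b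
  have ind: "(if E \<inter> K = R then 1 else 0) = (\<Prod>e\<in>U. if e \<in> K \<and> (e \<in> E) \<noteq> (e \<in> R) then 0 else (1::real))"
    for E
  proof (cases "E \<inter> K = R")
    case True
    have "\<forall>e\<in>U. (if e \<in> K \<and> (e \<in> E) \<noteq> (e \<in> R) then 0 else (1::real)) = 1" using True by auto
    then show ?thesis using True by simp
  next
    case False
    then obtain e where e: "e \<in> K" "(e \<in> E) \<noteq> (e \<in> R)" using RK by blast
    hence "e \<in> U" using KU by auto
    then have "(\<Prod>e\<in>U. if e \<in> K \<and> (e \<in> E) \<noteq> (e \<in> R) then 0 else (1::real)) = 0"
      using fin e by (subst prod_zero_iff) auto
    then show ?thesis using False by simp
  qed
  have "(\<Sum>E\<in>Pow U. (\<Prod>e\<in>U. if e \<in> E then q e else 1 - q e) * (if E \<inter> K = R then 1 else 0))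
      = (\<Sum>E\<in>Pow U. \<Prod>e\<in>U. h e (e \<in> E))"
    unfolding ind h_def by (simp add: prod.distrib)
  also have "\<dots> = (\<Prod>e\<in>U. h e True + h e False)" using fin by (rule sum_pow_prod)
  also have "\<dots> = (\<Prod>e\<in>U. if e \<in> K then (if e \<in> R then q e else 1 - q e) else 1)"
    by (rule prod.cong) (auto simp: h_def)
  also have "\<dots> = (\<Prod>e\<in>U \<inter> {e. e \<in> K}. if e \<in> R then q e else 1 - q e) * (\<Prod>e\<in>U \<inter> - {e. e \<in> K}. 1)"
    using fin by (rule prod.If_cases)
  also have "U \<inter> {e. e \<in> K} = K" using KU by auto
  finally show ?thesis by simp
qed

lemma graph_prob_sum1:
  "(\<Sum>E\<in>Pow (all_pairs N). graph_prob N p E) = 1"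
proof -
  have fin: "finite (all_pairs N)"
    by (rule finite_subset[of _ "Pow (node_set N)"]) (auto simp: all_pairs_def node_set_def)
  from marg[OF fin, of "{}" "{}" "edge_prob p"] show ?thesis by (simp add: graph_prob_def)
qed


definition Kset :: "nat \<Rightarrow> nat set \<Rightarrow> nat set set" where
  "Kset N S = {e \<in> all_pairs N. e \<inter> S \<noteq> {}}"
definition star :: "nat set \<Rightarrow> nat set set" where
  "star S = (\<lambda>s. {Min S, s}) ` (S - {Min S})"
definition Rset :: "nat set \<Rightarrow> nat \<Rightarrow> nat set set" where
  "Rset S j = insert {Min S, j} (star S)"

lemma card_star:
  assumes "finite S" "card S = g" "g \<ge> 1"
  shows "card (star S) = g - 1"
proof -
  have "inj_on (\<lambda>s. {Min S, s}) (S - {Min S})"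
    by (rule inj_onI) (auto simp: doubleton_eq_iff)
  moreover have "S \<noteq> {}" using assms by auto
  hence "Min S \<in> S" using assms(1) by simp
  ultimately show ?thesis using assms by (simp add: star_def card_image)
qed

lemma star_sub: assumes "finite S" "S \<noteq> {}" "e \<in> star S" shows "e \<subseteq> S"
proof -
  have "Min S \<in> S" using assms(1,2) Min_in by blast
  thus ?thesis using assms(3) by (auto simp: star_def)
qed

lemma Rset_props:
  assumes S: "S \<subseteq> node_set N" "card S = g" "g \<ge> 1" and j: "j \<in> node_set N - S"
  shows "Rset S j \<subseteq> Kset N S" "card (Rset S j) = g" "{Min S, j} \<notin> star S"
proof -
  have fin: "finite S" using S(1) finite_subset by (auto simp: node_set_def)
  have ne: "S \<noteq> {}" using S(2,3) by auto
  have c: "Min S \<in> S" using fin ne by simp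
  show nst: "{Min S, j} \<notin> star S"
    using j by (auto simp: star_def doubleton_eq_iff)
  show "Rset S j \<subseteq> Kset N S"
    using c S(1) j by (auto simp: Rset_def Kset_def star_def all_pairs_def)
  show "card (Rset S j) = g"
    using nst card_star[OF fin S(2,3)] S(3) fin by (simp add: Rset_def star_def)
qed

lemma event_dangling:
  assumes EU: "E \<subseteq> all_pairs N" and S: "S \<subseteq> node_set N" "card S = g" "g \<ge> 1"
    and j: "j \<in> node_set N - S" and ev: "E \<inter> Kset N S = Rset S j"
  shows "dangling E g S"
proof -
  have fin: "finite S" using S(1) finite_subset by (auto simp: node_set_def)
  have ne: "S \<noteq> {}" using S(2,3) by auto
  define c where "c = Min S"
  have c: "c \<in> S" using fin ne by (simp add: c_def)
  have two: "\<forall>e\<in>E. card e = 2" using EU card_pairs by blast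
  have RE: "Rset S j \<subseteq> E" using ev by auto
  have nst: "{Min S, j} \<notin> star S" using Rset_props[OF S j] by blast
  have ind: "induced_edges E S = star S"
  proof
    show "induced_edges E S \<subseteq> star S"
    proof
      fix e assume e: "e \<in> induced_edges E S"
      hence eE: "e \<in> E" "e \<subseteq> S" by (auto simp: induced_edges_def)
      have "e \<noteq> {}" using two eE(1) by fastforce
      hence "e \<in> Kset N S" using eE EU by (auto simp: Kset_def)
      hence "e \<in> Rset S j" using ev eE by blast
      moreover have "e \<noteq> {Min S, j}" using eE j by auto
      ultimately show "e \<in> star S" by (simp add: Rset_def)
    qed
    show "star S \<subseteq> induced_edges E S"
      using RE star_sub[OF fin ne] by (auto simp: induced_edges_def Rset_def)
  qed
  have bnd: "boundary_edges E S = {{c, j}}"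
  proof
    show "boundary_edges E S \<subseteq> {{c, j}}"
    proof
      fix e assume "e \<in> boundary_edges E S"
      hence e: "e \<in> E" "e \<inter> S \<noteq> {}" "\<not> e \<subseteq> S" by (auto simp: boundary_edges_def)
      hence "e \<in> Rset S j" using ev EU by (auto simp: Kset_def)
      moreover have "e \<notin> star S" using e star_sub[OF fin ne] by blast
      ultimately show "e \<in> {{c, j}}" by (simp add: Rset_def c_def)
    qed
    show "{{c, j}} \<subseteq> boundary_edges E S"
      using RE c j by (auto simp: Rset_def boundary_edges_def c_def)
  qed
  have nbr: "y = c" if x: "x \<in> S" "x \<noteq> c" "y \<in> S" "adj E x y" for x y
  proof -
    have "{x, y} \<in> induced_edges E S" using x by (auto simp: adj_def induced_edges_def)
    hence "{x, y} \<in> star S" using ind by simp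
    then obtain s where "{x, y} = {c, s}" by (auto simp: star_def c_def)
    with x(2) show ?thesis by (auto simp: doubleton_eq_iff)
  qed
  have nocyc: "\<not> has_cycle_in E S"
  proof
    assume "has_cycle_in E S"
    then obtain vs where vs: "length vs \<ge> 3" "distinct vs" "set vs \<subseteq> S"
      "\<forall>k. Suc k < length vs \<longrightarrow> adj E (vs ! k) (vs ! Suc k)" "adj E (last vs) (hd vs)"
      unfolding has_cycle_in_def by blast
    define n where "n = length vs"
    have inS: "vs ! k \<in> S" if "k < n" for k using vs(3) that nth_mem by (auto simp: n_def)
    have a01: "adj E (vs!0) (vs!1)" using vs(1) vs(4)[rule_format, of 0] by simp
    have a12: "adj E (vs!1) (vs!2)" using vs(1) vs(4)[rule_format, of 1] by (simp add: numeral_2_eq_2)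
    have vne: "vs \<noteq> []" using vs(1) by auto
    have hl: "hd vs = vs ! 0" "last vs = vs ! (n - 1)" using vne
      by (auto simp: n_def hd_conv_nth last_conv_nth)
    have al0: "adj E (vs!(n-1)) (vs!0)" using vs(5) hl by simp
    have dist: "vs ! i \<noteq> vs ! k" if "i < n" "k < n" "i \<noteq> k" for i k
      using vs(2) that nth_eq_iff_index_eq by (auto simp: n_def)
    have n3: "n \<ge> 3" using vs(1) by (simp add: n_def)
    have i0: "vs!0 \<in> S" and i1: "vs!1 \<in> S" and i2: "vs!2 \<in> S" and il: "vs!(n-1) \<in> S"
      using inS n3 by auto
    show False
    proof (cases "vs ! 0 = c")
      case False
      have "vs!1 = c" using nbr[OF i0 False i1 a01] .
      moreover have "vs!(n-1) = c" using nbr[OF i0 False il] al0 adj_sym by metis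
      moreover have "vs!1 \<noteq> vs!(n-1)" by (rule dist) (use n3 in auto)
      ultimately show False by simp
    next
      case True
      have "vs!0 \<noteq> vs!1" by (rule dist) (use n3 in auto)
      hence ne1: "vs!1 \<noteq> c" using True by simp
      have "vs!2 = c" using nbr[OF i1 ne1 i2 a12] .
      moreover have "vs!0 \<noteq> vs!2" by (rule dist) (use n3 in auto)
      ultimately show False using True by simp
    qed
  qed
  show ?thesis unfolding dangling_def
    using S(2) ind card_star[OF fin S(2,3)] nocyc bnd by simp
qed

lemma sum_ind: "finite A \<Longrightarrow> (\<Sum>x\<in>A. if P x then 1 else 0 :: real) = real (card {x\<in>A. P x})"
  by (simp add: sum.inter_filter[symmetric])

lemma count_le:
  assumes EU: "E \<subseteq> all_pairs N" and g: "g \<ge> 1" and VpV: "Vp \<subseteq> node_set N"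
  shows "(\<Sum>S\<in>{S. S \<subseteq> Vp \<and> card S = g}. \<Sum>j\<in>node_set N - S.
          if E \<inter> Kset N S = Rset S j then 1 else 0 :: real) \<le> real (D_count N g E)"
proof -
  define V where "V = node_set N"
  have finV: "finite V" by (simp add: V_def node_set_def)
  define F0 where "F0 = {S. S \<subseteq> Vp \<and> card S = g}"
  have finF0: "finite F0"
    by (rule finite_subset[of _ "Pow V"]) (use VpV finV in \<open>auto simp: F0_def V_def\<close>)
  have each: "(\<Sum>j\<in>V - S. if E \<inter> Kset N S = Rset S j then 1 else 0 :: real)
        \<le> (if dangling E g S then 1 else 0)" if S: "S \<in> F0" for S
  proof -
    have SV: "S \<subseteq> node_set N" "card S = g" using S VpV by (auto simp: F0_def)
    define J where "J = {j\<in>V - S. E \<inter> Kset N S = Rset S j}"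
    have finJ: "finite J" using finV by (simp add: J_def)
    have "(\<Sum>j\<in>V - S. if E \<inter> Kset N S = Rset S j then 1 else 0 :: real) = real (card J)"
      unfolding J_def using finV by (intro sum_ind) simp
    moreover have "card J \<le> 1"
    proof -
      have "\<forall>a\<in>J. \<forall>b\<in>J. a = b"
      proof (intro ballI)
        fix a b assume a: "a \<in> J" and b: "b \<in> J"
        hence eq: "Rset S a = Rset S b" and ab: "a \<notin> S" "b \<notin> S" by (auto simp: J_def)
        have "{Min S, a} \<in> Rset S a" unfolding Rset_def by (rule insertI1)
        hence "{Min S, a} \<in> Rset S b" using eq by simp
        hence "{Min S, a} = {Min S, b} \<or> {Min S, a} \<in> star S" unfolding Rset_def by (rule insertE) auto
        moreover have "{Min S, a} \<notin> star S" using ab by (auto simp: star_def doubleton_eq_iff)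
        ultimately have "{Min S, a} = {Min S, b}" by blast
        moreover have "a \<noteq> Min S" using ab SV g
          by (metis Min_in card.infinite card_0_eq not_one_le_zero)
        ultimately show "a = b" by (auto simp: doubleton_eq_iff)
      qed
      then show ?thesis using finJ by (simp add: card_le_Suc0_iff_eq)
    qed
    moreover have "J \<noteq> {} \<Longrightarrow> dangling E g S"
      using event_dangling[OF EU SV g] by (auto simp: J_def V_def)
    ultimately show ?thesis by (cases "J = {}") auto
  qed
  have "(\<Sum>S\<in>F0. \<Sum>j\<in>V - S. if E \<inter> Kset N S = Rset S j then 1 else 0 :: real)
        \<le> (\<Sum>S\<in>F0. if dangling E g S then 1 else 0)"
    by (rule sum_mono) (rule each)
  also have "\<dots> = real (card {S\<in>F0. dangling E g S})" using finF0 by (rule sum_ind)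
  also have "\<dots> \<le> real (D_count N g E)"
  proof -
    have "card {S\<in>F0. dangling E g S} \<le> card {S. S \<subseteq> node_set N \<and> dangling E g S}"
      by (rule card_mono) (use finV VpV in \<open>auto simp: V_def F0_def intro: finite_subset[of _ "Pow V"]\<close>)
    then show ?thesis by (simp add: D_count_def)
  qed
  finally show ?thesis by (simp add: F0_def V_def)
qed


lemma ep_pair:
  assumes sym: "\<forall>i\<in>node_set N. \<forall>j\<in>node_set N. i \<noteq> j \<longrightarrow> p i j = p j i"
    and ij: "i \<in> node_set N" "j \<in> node_set N" "i \<noteq> j"
  shows "edge_prob p {i, j} = p i j"
proof (cases "i < j")
  case True
  then show ?thesis by (simp add: edge_prob_def min_def max_def)
next
  case False
  then have "edge_prob p {i, j} = p j i" by (simp add: edge_prob_def min_def max_def)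
  also have "\<dots> = p i j" using sym ij by metis
  finally show ?thesis .
qed

lemma all_pairs_obtain:
  assumes "e \<in> all_pairs N"
  obtains i j where "e = {i, j}" "i \<in> node_set N" "j \<in> node_set N" "i \<noteq> j"
  using assms by (auto simp: all_pairs_def)

lemma fin_all_pairs: "finite (all_pairs N)"
  by (rule finite_subset[of _ "Pow (node_set N)"]) (auto simp: all_pairs_def node_set_def)

lemma K_card:
  assumes "S \<subseteq> node_set N"
  shows "card (Kset N S) \<le> card S * N"
proof -
  have fS: "finite S" using assms finite_subset by (auto simp: node_set_def)
  have "Kset N S \<subseteq> (\<lambda>(x, y). {x, y}) ` (S \<times> node_set N)"
  proof
    fix e assume e: "e \<in> Kset N S"
    then obtain i j where ij: "e = {i, j}" "i \<in> node_set N" "j \<in> node_set N" "i \<noteq> j"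
      "e \<inter> S \<noteq> {}" by (auto simp: Kset_def all_pairs_def)
    show "e \<in> (\<lambda>(x, y). {x, y}) ` (S \<times> node_set N)"
    proof (cases "i \<in> S")
      case True
      then show ?thesis using ij by (auto intro: image_eqI[of _ _ "(i, j)"])
    next
      case False
      hence "j \<in> S" using ij by auto
      then show ?thesis using ij by (auto intro: image_eqI[of _ _ "(j, i)"])
    qed
  qed
  hence "card (Kset N S) \<le> card ((\<lambda>(x, y). {x, y}) ` (S \<times> node_set N))"
    using fS by (intro card_mono) (auto simp: node_set_def)
  also have "\<dots> \<le> card (S \<times> node_set N)" by (rule card_image_le) (simp add: fS node_set_def)
  also have "\<dots> = card S * N" by (simp add: card_cartesian_product node_set_def)
  finally show ?thesis .
qed

lemma term_lower:
  fixes \<epsilon> b :: real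
  assumes H: "\<forall>i\<in>node_set N. \<forall>j\<in>node_set N. i \<noteq> j \<longrightarrow>
          p i j = p j i \<and> (1 + \<epsilon>) / real N < p i j \<and> p i j \<le> 1"
    and eps: "\<epsilon> > 0" and N1: "N \<ge> 1" and bN: "b \<le> real N" and b0: "b > 0"
    and S: "S \<subseteq> V_p N b p" "card S = g" "g \<ge> 1" and j: "j \<in> node_set N - S"
  shows "(1 / real N) ^ g * (1 - b / real N) ^ (g * N) \<le>
     (\<Prod>e\<in>Kset N S. if e \<in> Rset S j then edge_prob p e else 1 - edge_prob p e)"
proof -
  have SV: "S \<subseteq> node_set N" using S(1) by (auto simp: V_p_def)
  have sym: "\<forall>i\<in>node_set N. \<forall>j\<in>node_set N. i \<noteq> j \<longrightarrow> p i j = p j i" using H by blast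
  define K where "K = Kset N S"
  define R where "R = Rset S j"
  have RK: "R \<subseteq> K" and cR: "card R = g" using Rset_props[OF SV S(2,3) j] by (auto simp: K_def R_def)
  have finK: "finite K" using fin_all_pairs by (auto simp: K_def Kset_def)
  have Npos: "real N > 0" using N1 by simp
  have epK: "1 / real N \<le> edge_prob p e \<and> edge_prob p e \<le> 1 \<and> edge_prob p e \<le> b / real N"
    if e: "e \<in> K" for e
  proof -
    obtain i k where ik: "e = {i, k}" "i \<in> node_set N" "k \<in> node_set N" "i \<noteq> k"
      using e by (auto simp: K_def Kset_def all_pairs_def)
    have ep: "edge_prob p e = p i k" using ep_pair[OF sym ik(2-4)] ik(1) by simp
    have r: "(1 + \<epsilon>) / real N < p i k" "p i k \<le> 1" "p i k = p k i" using H ik by auto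
    have "1 / real N \<le> (1 + \<epsilon>) / real N" using eps Npos by (simp add: divide_right_mono)
    moreover have "p i k < b / real N"
    proof -
      have "e \<inter> S \<noteq> {}" using e by (auto simp: K_def Kset_def)
      hence "i \<in> S \<or> k \<in> S" using ik by auto
      then show ?thesis
      proof
        assume "i \<in> S"
        hence "i \<in> V_p N b p" using S(1) by auto
        then show ?thesis using ik by (auto simp: V_p_def)
      next
        assume "k \<in> S"
        hence "k \<in> V_p N b p" using S(1) by auto
        then show ?thesis using ik r(3) by (auto simp: V_p_def)
      qed
    qed
    ultimately show ?thesis using ep r by auto
  qed
  have split: "(\<Prod>e\<in>K. if e \<in> R then edge_prob p e else 1 - edge_prob p e)
      = (\<Prod>e\<in>K \<inter> {e. e \<in> R}. edge_prob p e) * (\<Prod>e\<in>K \<inter> - {e. e \<in> R}. 1 - edge_prob p e)"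
    using finK by (rule prod.If_cases)
  have "K \<inter> {e. e \<in> R} = R" using RK by auto
  moreover have "K \<inter> - {e. e \<in> R} = K - R" by auto
  ultimately have split': "(\<Prod>e\<in>K. if e \<in> R then edge_prob p e else 1 - edge_prob p e)
      = (\<Prod>e\<in>R. edge_prob p e) * (\<Prod>e\<in>K - R. 1 - edge_prob p e)" using split by simp
  have P1: "(1 / real N) ^ g \<le> (\<Prod>e\<in>R. edge_prob p e)"
  proof -
    have "(\<Prod>e\<in>R. 1 / real N) \<le> (\<Prod>e\<in>R. edge_prob p e)"
      using epK RK by (intro prod_mono) auto
    then show ?thesis using cR by simp
  qed
  have b1: "0 \<le> 1 - b / real N" "1 - b / real N \<le> 1" using bN Npos b0 by (auto simp: field_simps)
  have P2: "(1 - b / real N) ^ (g * N) \<le> (\<Prod>e\<in>K - R. 1 - edge_prob p e)"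
  proof -
    have cK: "card (K - R) \<le> g * N" using K_card[OF SV] S(2) card_Diff_subset[of R K] finK
      by (simp add: K_def) (meson card_mono diff_le_self finK Diff_subset le_trans)
    have "(1 - b / real N) ^ (g * N) \<le> (1 - b / real N) ^ card (K - R)"
      by (rule power_decreasing[OF cK b1])
    also have "\<dots> = (\<Prod>e\<in>K - R. 1 - b / real N)" by simp
    also have "\<dots> \<le> (\<Prod>e\<in>K - R. 1 - edge_prob p e)"
      using epK b1 by (intro prod_mono) auto
    finally show ?thesis .
  qed
  have "(1 / real N) ^ g * (1 - b / real N) ^ (g * N)
      \<le> (\<Prod>e\<in>R. edge_prob p e) * (\<Prod>e\<in>K - R. 1 - edge_prob p e)"
    by (rule mult_mono[OF P1 P2]) (use P1 Npos b1 in \<open>auto intro: order_trans[OF _ P1]\<close>)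
  then show ?thesis using split' by (simp add: K_def R_def)
qed

lemma exp_bound:
  fixes b :: real
  assumes b0: "b > 0" and N: "2 * b \<le> real N"
  shows "exp (- 2 * b) \<le> (1 - b / real N) ^ N"
proof -
  have Npos: "real N > 0" using b0 N by simp
  define x where "x = b / real N"
  have x0: "0 \<le> x" and xh: "x \<le> 1 / 2" using b0 N Npos by (auto simp: x_def field_simps)
  have Nx: "real N * x = b" using Npos by (simp add: x_def)
  have ln: "- x - 2 * x\<^sup>2 \<le> ln (1 - x)" using ln_one_minus_pos_lower_bound[OF x0 xh] .
  have "real N * (- x - 2 * x\<^sup>2) = - b - 2 * b * x"
    using Nx by (simp add: power2_eq_square algebra_simps)
  also have "\<dots> \<ge> - 2 * b" proof -
    have "b * x \<le> b * (1/2)" using b0 xh by (intro mult_left_mono) auto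
    then show ?thesis by linarith
  qed
  finally have "- 2 * b \<le> real N * ln (1 - x)"
    using mult_left_mono[OF ln, of "real N"] Npos by linarith
  hence "exp (- 2 * b) \<le> exp (real N * ln (1 - x))" by simp
  also have "\<dots> = exp (ln (1 - x)) ^ N" by (rule exp_of_nat_mult)
  also have "\<dots> = (1 - x) ^ N" using xh by simp
  finally show ?thesis by (simp add: x_def)
qed


theorem theorem3p4:
  fixes g :: nat and \<epsilon> b \<eta> :: real
  assumes "g \<ge> 1" and "\<epsilon> > 0" and "b > 0" and "\<eta> > 0"
  shows "\<exists>c>0. \<exists>N0::nat. \<forall>N\<ge>N0. \<forall>p :: nat \<Rightarrow> nat \<Rightarrow> real.
     ((\<forall>i\<in>node_set N. \<forall>j\<in>node_set N. i \<noteq> j \<longrightarrow>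
          p i j = p j i \<and> (1 + \<epsilon>) / real N < p i j \<and> p i j \<le> 1)
      \<and> real (card (V_p N b p)) > \<eta> * real N)
     \<longrightarrow> c * real N \<le> expected_D N g p \<and> expected_D N g p \<le> real N"
proof -
  note g1 = assms(1) and eps = assms(2) and b0 = assms(3) and eta = assms(4)
  define A where "A = (\<eta> / real g) ^ g"
  define B where "B = exp (- 2 * b) ^ g"
  define c where "c = A * B / 2"
  define x where "x = 2 * real g + 2 * b + real g / \<eta>"
  define N0 where "N0 = nat \<lceil>x\<rceil> + 1"
  have A0: "A > 0" using g1 eta by (simp add: A_def)
  have B0: "B > 0" by (simp add: B_def)
  have c0: "c > 0" using A0 B0 by (simp add: c_def)
  have x0: "x \<ge> 0" using b0 eta by (simp add: x_def)
  show ?thesis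
  proof (rule exI[of _ c], rule conjI[OF c0], rule exI[of _ N0], intro allI impI)
    fix N :: nat and p :: "nat \<Rightarrow> nat \<Rightarrow> real"
    assume N: "N0 \<le> N"
    assume hyp: "(\<forall>i\<in>node_set N. \<forall>j\<in>node_set N. i \<noteq> j \<longrightarrow>
          p i j = p j i \<and> (1 + \<epsilon>) / real N < p i j \<and> p i j \<le> 1)
      \<and> real (card (V_p N b p)) > \<eta> * real N"
    have H: "\<forall>i\<in>node_set N. \<forall>j\<in>node_set N. i \<noteq> j \<longrightarrow>
          p i j = p j i \<and> (1 + \<epsilon>) / real N < p i j \<and> p i j \<le> 1" using hyp by blast
    have Vpc: "real (card (V_p N b p)) > \<eta> * real N" using hyp by blast
    have Nx: "real N \<ge> x + 1"
    proof -
      have "real N \<ge> real (nat \<lceil>x\<rceil>) + 1" using N by (simp add: N0_def)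
      moreover have "real (nat \<lceil>x\<rceil>) = of_int \<lceil>x\<rceil>" using x0 by simp
      moreover have "of_int \<lceil>x\<rceil> \<ge> x" by (rule le_of_int_ceiling)
      ultimately show ?thesis by linarith
    qed
    have N2g: "real N \<ge> 2 * real g" and N2b: "real N \<ge> 2 * b" and Ng: "real N \<ge> real g / \<eta>"
      and N1: "N \<ge> 1"
    proof -
      have ge: "real g / \<eta> \<ge> 0" using eta by simp
      show "real N \<ge> 2 * real g" "real N \<ge> 2 * b" "real N \<ge> real g / \<eta>"
        using Nx b0 ge by (auto simp: x_def)
      have "real N \<ge> 1" using Nx x0 by linarith
      then show "N \<ge> 1" by simp
    qed
    have Npos: "real N > 0" using N1 by simp
    define U where "U = all_pairs N"
    have finU: "finite U" by (simp add: U_def fin_all_pairs)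
    have ep01: "0 \<le> edge_prob p e \<and> edge_prob p e \<le> 1" if eU: "e \<in> U" for e
    proof -
      obtain i k where ik: "e = {i, k}" "i \<in> node_set N" "k \<in> node_set N" "i \<noteq> k"
        using eU all_pairs_obtain unfolding U_def by metis
      have sym: "\<forall>i\<in>node_set N. \<forall>j\<in>node_set N. i \<noteq> j \<longrightarrow> p i j = p j i" using H by blast
      have ep: "edge_prob p e = p i k" using ep_pair[OF sym ik(2-4)] ik(1) by simp
      have "(1 + \<epsilon>) / real N < p i k" "p i k \<le> 1" using H ik by auto
      moreover have "0 \<le> (1 + \<epsilon>) / real N" using eps Npos by simp
      ultimately show ?thesis using ep by linarith
    qed
    have gp0: "graph_prob N p E \<ge> 0" for E
      unfolding graph_prob_def using ep01 by (intro prod_nonneg) (auto simp: U_def)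
    have sum1: "(\<Sum>E\<in>Pow U. graph_prob N p E) = 1" unfolding U_def by (rule graph_prob_sum1)
    have upper: "expected_D N g p \<le> real N"
    proof -
      have "expected_D N g p \<le> (\<Sum>E\<in>Pow U. graph_prob N p E * real N)"
        unfolding expected_D_def U_def
      proof (rule sum_mono)
        fix E assume "E \<in> Pow (all_pairs N)"
        hence "D_count N g E \<le> N" by (intro D_le) auto
        then show "graph_prob N p E * real (D_count N g E) \<le> graph_prob N p E * real N"
          using gp0 by (intro mult_left_mono) auto
      qed
      also have "\<dots> = real N" using sum1 by (simp add: sum_distrib_right[symmetric])
      finally show ?thesis .
    qed
    define Vp where "Vp = V_p N b p"
    define V where "V = node_set N"
    have VpV: "Vp \<subseteq> V" by (auto simp: Vp_def V_def V_p_def)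
    have finV: "finite V" by (simp add: V_def node_set_def)
    have cardV: "card V = N" by (simp add: V_def node_set_def)
    define F0 where "F0 = {S. S \<subseteq> Vp \<and> card S = g}"
    have finF0: "finite F0"
      by (rule finite_subset[of _ "Pow V"]) (use VpV finV in \<open>auto simp: F0_def\<close>)
    define ind where "ind E S j = (if E \<inter> Kset N S = Rset S j then 1 else 0 :: real)" for E S j
    define L where "L = (1 / real N) ^ g * (1 - b / real N) ^ (g * N)"
    have L0: "L \<ge> 0" using N2b b0 Npos by (simp add: L_def field_simps)
    have "real (card F0) * ((real N - real g) * L) = (\<Sum>S\<in>F0. \<Sum>j\<in>V - S. L)"
    proof -
      have each: "(\<Sum>j\<in>V - S. L) = (real N - real g) * L" if "S \<in> F0" for S
      proof -
        have "S \<subseteq> V" "card S = g" using that VpV by (auto simp: F0_def)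
        hence "card (V - S) = N - g" using finV cardV by (simp add: card_Diff_subset finite_subset)
        moreover have "g \<le> N" using N2g by linarith
        ultimately show ?thesis by (simp add: of_nat_diff)
      qed
      have "(\<Sum>S\<in>F0. \<Sum>j\<in>V - S. L) = (\<Sum>S\<in>F0. (real N - real g) * L)"
        by (rule sum.cong[OF refl]) (rule each)
      then show ?thesis by simp
    qed
    also have "\<dots> \<le> (\<Sum>S\<in>F0. \<Sum>j\<in>V - S. \<Prod>e\<in>Kset N S. if e \<in> Rset S j then edge_prob p e else 1 - edge_prob p e)"
    proof (intro sum_mono)
      fix S j assume S: "S \<in> F0" and j: "j \<in> V - S"
      show "L \<le> (\<Prod>e\<in>Kset N S. if e \<in> Rset S j then edge_prob p e else 1 - edge_prob p e)"
        unfolding L_def using term_lower[OF H eps N1 _ b0, of S g j] N2b b0 S j g1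
        by (auto simp: F0_def Vp_def V_def)
    qed
    also have "\<dots> = (\<Sum>S\<in>F0. \<Sum>j\<in>V - S. \<Sum>E\<in>Pow U. graph_prob N p E * ind E S j)"
    proof (intro sum.cong refl)
      fix S j assume S: "S \<in> F0" and j: "j \<in> V - S"
      have SV: "S \<subseteq> node_set N" "card S = g" using S VpV by (auto simp: F0_def V_def)
      have RK: "Rset S j \<subseteq> Kset N S" using Rset_props[OF SV g1] j by (auto simp: V_def)
      have KU: "Kset N S \<subseteq> U" by (auto simp: Kset_def U_def)
      show "(\<Prod>e\<in>Kset N S. if e \<in> Rset S j then edge_prob p e else 1 - edge_prob p e) =
          (\<Sum>E\<in>Pow U. graph_prob N p E * ind E S j)"
        using marg[OF finU RK KU, of "edge_prob p"] by (simp add: graph_prob_def ind_def U_def)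
    qed
    also have "(\<Sum>S\<in>F0. \<Sum>j\<in>V - S. \<Sum>E\<in>Pow U. graph_prob N p E * ind E S j)
        = (\<Sum>E\<in>Pow U. graph_prob N p E * (\<Sum>S\<in>F0. \<Sum>j\<in>V - S. ind E S j))"
      by (simp add: sum_distrib_left sum.swap[of _ "Pow U"])
    also have "\<dots> \<le> expected_D N g p"
      unfolding expected_D_def U_def
    proof (rule sum_mono)
      fix E assume "E \<in> Pow (all_pairs N)"
      hence "(\<Sum>S\<in>F0. \<Sum>j\<in>V - S. ind E S j) \<le> real (D_count N g E)"
        using count_le[of E N g Vp] g1 VpV by (auto simp: F0_def V_def ind_def)
      then show "graph_prob N p E * (\<Sum>S\<in>F0. \<Sum>j\<in>V - S. ind E S j) \<le> graph_prob N p E * real (D_count N g E)"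
        using gp0 by (intro mult_left_mono) auto
    qed
    finally have low1: "real (card F0) * ((real N - real g) * L) \<le> expected_D N g p" .
    have finVp: "finite Vp" using VpV finV finite_subset by blast
    have cF0: "card F0 = card Vp choose g" unfolding F0_def using finVp by (rule n_subsets)
    have "\<eta> * real N \<ge> real g" using Ng eta by (simp add: field_simps)
    hence gVp: "g \<le> card Vp" using Vpc by (simp add: Vp_def)
    have "(\<eta> * real N / real g) ^ g \<le> (real (card Vp) / real g) ^ g"
      using Vpc eta Npos g1 by (intro power_mono divide_right_mono) (auto simp: Vp_def)
    also have "\<dots> \<le> real (card Vp choose g)" by (rule binomial_ge_n_over_k_pow_k[OF gVp])
    finally have cF0b: "(\<eta> * real N / real g) ^ g \<le> real (card F0)" using cF0 by simp
    have Lb: "(1 / real N) ^ g * B \<le> L"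
    proof -
      have "exp (- 2 * b) \<le> (1 - b / real N) ^ N" using exp_bound[OF b0 N2b] .
      hence "B \<le> ((1 - b / real N) ^ N) ^ g" unfolding B_def by (intro power_mono) auto
      also have "\<dots> = (1 - b / real N) ^ (g * N)" by (simp add: power_mult[symmetric] mult.commute)
      finally show ?thesis unfolding L_def by (intro mult_left_mono) auto
    qed
    have Ngg: "real N - real g \<ge> real N / 2" using N2g by simp
    have "c * real N = A * B * (real N / 2)" by (simp add: c_def)
    also have "\<dots> = (\<eta> * real N / real g) ^ g * ((real N / 2) * ((1 / real N) ^ g * B))"
    proof -
      have "(\<eta> * real N / real g) ^ g * (1 / real N) ^ g = A"
        unfolding A_def power_mult_distrib[symmetric] using Npos by simp
      then show ?thesis by (simp add: algebra_simps)
    qed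
    also have "\<dots> \<le> real (card F0) * ((real N - real g) * L)"
    proof (rule mult_mono[OF cF0b])
      show "real N / 2 * ((1 / real N) ^ g * B) \<le> (real N - real g) * L"
        using Ngg Lb Npos B0 by (intro mult_mono) auto
      show "0 \<le> real (card F0)" by simp
      show "0 \<le> real N / 2 * ((1 / real N) ^ g * B)" using Npos B0 by simp
    qed
    also have "\<dots> \<le> expected_D N g p" by (rule low1)
    finally show "c * real N \<le> expected_D N g p \<and> expected_D N g p \<le> real N" using upper by simp
  qed
qed

end
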